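(* Let $P$ be a finite poset and $R$ a commutative unital ring. Then $$Z^3_2(P,R)=Z^3_1(P,R)^2=\mathrm{span}_R\{e_{xxy}+e_{xyy}: x,y\in P,\ l(x,y)=1\}\oplus J^3_2(P,R).$$ In particular, $Z^3_2(P,R)$ is a subalgebra of $I^3(P,R)$.
   Context: For a finite poset $P$, $P^3_\le=\{(x,y,z)\in P^3: x\le y\le z\}$, and $I^3(P,R)$ is the $R$-module of functions $f:P^3_\le\to R$ with multiplication $(fg)(x_1,x_2,x_3)=\sum f(x_1,y_1,y_2)g(y_1,y_2,x_3)$ over all $x_1\le y_1\le x_2\le y_2\le x_3$. For $x\le y\le z$, $e_{xyz}$ is the function equal to $1$ at $(x,y,z)$ and $0$ elsewhere. For $a\le b$, $l(a,b)$ is the maximum of $|C|-1$ over chains $C$ in the interval $[a,b]$. $J^3_k(P,R)=\{f: f(x_1,x_2,x_3)=0 \text{ whenever } l(x_1,x_3)<k\}$. $[f,g]=fg-gf$; for subsets $U,V$, $[U,V]$ (resp. $UV$) is the $R$-submodule spanned by all $[u,v]$ (resp. $uv$), $u\in U,v\in V$, and $U^2=UU$. $Z^3_1(P,R)=J^3_1(P,R)$, $Z^3_2(P,R)=[Z^3_1(P,R),Z^3_1(P,R)]$. *)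

theory Defs
  imports Main "HOL.Modules" "HOL-Library.Function_Algebras"
begin

text \<open>The finite poset P is modelled by a finite type 'a with a partial order.
  Elements of I^3(P,R) are functions 'a => 'a => 'a => 'r vanishing off P^3_le.\<close>

type_synonym ('a, 'r) fun3 = "'a \<Rightarrow> 'a \<Rightarrow> 'a \<Rightarrow> 'r"

definition I3 :: "('a::order, 'r::comm_ring_1) fun3 set" where
  "I3 = {f. \<forall>x y z. \<not> (x \<le> y \<and> y \<le> z) \<longrightarrow> f x y z = 0}"

definition scale3 :: "'r::comm_ring_1 \<Rightarrow> ('a, 'r) fun3 \<Rightarrow> ('a, 'r) fun3" where
  "scale3 c f = (\<lambda>x y z. c * f x y z)"

definition rspan :: "('a, 'r::comm_ring_1) fun3 set \<Rightarrow> ('a, 'r) fun3 set" where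
  "rspan S = module.span scale3 S"

definition mult3 :: "('a::{finite,order}, 'r::comm_ring_1) fun3 \<Rightarrow> ('a, 'r) fun3 \<Rightarrow> ('a, 'r) fun3" where
  "mult3 f g = (\<lambda>x1 x2 x3. if x1 \<le> x2 \<and> x2 \<le> x3 then
      (\<Sum>(y1, y2) \<in> {(y1, y2). x1 \<le> y1 \<and> y1 \<le> x2 \<and> x2 \<le> y2 \<and> y2 \<le> x3}.
          f x1 y1 y2 * g y1 y2 x3)
    else 0)"

definition e3 :: "'a \<Rightarrow> 'a \<Rightarrow> 'a \<Rightarrow> ('a, 'r::comm_ring_1) fun3" where
  "e3 x y z = (\<lambda>a b c. if a = x \<and> b = y \<and> c = z then 1 else 0)"

definition is_chain :: "'a::order set \<Rightarrow> bool" where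
  "is_chain C \<longleftrightarrow> (\<forall>x\<in>C. \<forall>y\<in>C. x \<le> y \<or> y \<le> x)"

definition plen :: "'a::{finite,order} \<Rightarrow> 'a \<Rightarrow> nat" where
  "plen a b = Max {card C - 1 | C. C \<subseteq> {a..b} \<and> is_chain C}"

definition J3 :: "nat \<Rightarrow> ('a::{finite,order}, 'r::comm_ring_1) fun3 set" where
  "J3 k = {f \<in> I3. \<forall>x1 x2 x3. x1 \<le> x2 \<and> x2 \<le> x3 \<and> plen x1 x3 < k \<longrightarrow> f x1 x2 x3 = 0}"

definition commut3 :: "('a::{finite,order}, 'r::comm_ring_1) fun3 \<Rightarrow> ('a, 'r) fun3 \<Rightarrow> ('a, 'r) fun3" where
  "commut3 f g = mult3 f g - mult3 g f"

definition setprod3 :: "('a::{finite,order}, 'r::comm_ring_1) fun3 set \<Rightarrow> ('a, 'r) fun3 set \<Rightarrow> ('a, 'r) fun3 set" where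
  "setprod3 U V = rspan {mult3 u v | u v. u \<in> U \<and> v \<in> V}"

definition setcomm3 :: "('a::{finite,order}, 'r::comm_ring_1) fun3 set \<Rightarrow> ('a, 'r) fun3 set \<Rightarrow> ('a, 'r) fun3 set" where
  "setcomm3 U V = rspan {commut3 u v | u v. u \<in> U \<and> v \<in> V}"

definition Z3_1 :: "('a::{finite,order}, 'r::comm_ring_1) fun3 set" where
  "Z3_1 = J3 1"

definition Z3_2 :: "('a::{finite,order}, 'r::comm_ring_1) fun3 set" where
  "Z3_2 = setcomm3 Z3_1 Z3_1"

end

theory Submission
  imports Defs
begin

interpretation m3: module "scale3 :: 'r::comm_ring_1 \<Rightarrow> ('a, 'r) fun3 \<Rightarrow> ('a, 'r) fun3"
  by unfold_locales (auto simp: scale3_def fun_eq_iff algebra_simps)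

lemma rspan_eq: "rspan = m3.span"
  by (simp add: rspan_def fun_eq_iff)

lemma scale3_apply [simp]: "scale3 c f x y z = c * f x y z"
  by (simp add: scale3_def)

lemma sum_fun3: "(\<Sum>i\<in>A. F i) p q r = (\<Sum>i\<in>A. F i p q r)"
  by (induction A rule: infinite_finite_induct) auto

lemma e3_apply: "e3 x y z a b c = (if a = x \<and> b = y \<and> c = z then 1 else 0)"
  by (simp add: e3_def)

definition betw :: "'a::order \<Rightarrow> 'a \<Rightarrow> bool" where
  "betw a c \<longleftrightarrow> (\<exists>m. a < m \<and> m < c)"

lemma plen_finite: "finite {card C - 1 | C. C \<subseteq> {a..b} \<and> is_chain (C::'a::{finite,order} set)}"
proof -
  have "{card C - 1 | C. C \<subseteq> {a..b} \<and> is_chain (C::'a set)} \<subseteq> {..card (UNIV::'a set)}"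
  proof -
    have "card (C::'a set) - 1 \<le> card (UNIV::'a set)" for C
      using card_mono[OF finite_UNIV subset_UNIV, of C] by linarith
    then show ?thesis by auto
  qed
  then show ?thesis using finite_subset by blast
qed

lemma plen_ge: "C \<subseteq> {a..b} \<Longrightarrow> is_chain C \<Longrightarrow> card C - 1 \<le> plen a b"
  unfolding plen_def by (rule Max_ge[OF plen_finite]) blast

lemma plen_obtain:
  fixes a b :: "'a::{finite,order}"
  obtains C where "C \<subseteq> {a..b}" "is_chain C" "plen a b = card C - 1"
proof -
  have "card {} - 1 \<in> {card C - 1 | C. C \<subseteq> {a..b} \<and> is_chain (C::'a set)}"
    by (rule CollectI, rule exI[of _ "{}"]) (auto simp: is_chain_def)
  then have "{card C - 1 | C. C \<subseteq> {a..b} \<and> is_chain (C::'a set)} \<noteq> {}" by blast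
  from Max_in[OF plen_finite this] that show ?thesis unfolding plen_def by blast
qed

lemma plen_le: "{a..c} \<subseteq> S \<Longrightarrow> plen a (c::'a::{finite,order}) \<le> card S - 1"
proof -
  assume S: "{a..c} \<subseteq> S"
  obtain C where "C \<subseteq> {a..c}" "plen a c = card C - 1" using plen_obtain[of a c] by blast
  moreover have "card C \<le> card S" using calculation(1) S by (intro card_mono) auto
  ultimately show ?thesis by simp
qed

lemma plen_ge1: "1 \<le> plen a c \<longleftrightarrow> (a::'a::{finite,order}) < c"
proof
  assume "1 \<le> plen a c"
  show "a < c"
  proof (rule ccontr)
    assume "\<not> a < c"
    then have "{a..c} \<subseteq> {a}" by (auto simp: less_le)
    then have "plen a c \<le> card {a} - 1" by (rule plen_le)
    with \<open>1 \<le> plen a c\<close> show False by simp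
  qed
next
  assume "a < c"
  then have "card {a, c} - 1 \<le> plen a c" by (intro plen_ge) (auto simp: is_chain_def)
  with \<open>a < c\<close> show "1 \<le> plen a c" by simp
qed

lemma plen_ge2: "2 \<le> plen a c \<longleftrightarrow> betw (a::'a::{finite,order}) c"
proof
  assume "2 \<le> plen a c"
  show "betw a c"
  proof (rule ccontr)
    assume "\<not> betw a c"
    then have "{a..c} \<subseteq> {a, c}" by (auto simp: betw_def less_le)
    then have "plen a c \<le> card {a, c} - 1" by (rule plen_le)
    also have "\<dots> \<le> 1" by (cases "a = c") auto
    finally show False using \<open>2 \<le> plen a c\<close> by simp
  qed
next
  assume "betw a c"
  then obtain m where m: "a < m" "m < c" by (auto simp: betw_def)
  then have "card {a, m, c} - 1 \<le> plen a c"
    by (intro plen_ge) (auto simp: is_chain_def less_imp_le intro: order_trans)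
  moreover have "a \<noteq> m" "m \<noteq> c" "a \<noteq> c" using m by auto
  then have "card {a, m, c} = 3" by auto
  ultimately show "2 \<le> plen a c" by simp
qed

lemma Z1_iff: "f \<in> Z3_1 \<longleftrightarrow> f \<in> I3 \<and> (\<forall>x. f x x x = 0)"
proof -
  have "plen x1 x3 < 1 \<longleftrightarrow> \<not> x1 < x3" for x1 x3 :: 'a using plen_ge1[of x1 x3] by linarith
  then show ?thesis unfolding Z3_1_def J3_def
    by (auto simp: less_le)
qed

lemma J2_iff: "f \<in> J3 2 \<longleftrightarrow> f \<in> I3 \<and> (\<forall>x1 x2 x3. x1 \<le> x2 \<and> x2 \<le> x3 \<and> \<not> betw x1 x3 \<longrightarrow> f x1 x2 x3 = 0)"
proof -
  have "plen x1 x3 < 2 \<longleftrightarrow> \<not> betw x1 x3" for x1 x3 :: 'a using plen_ge2[of x1 x3] by linarith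
  then show ?thesis unfolding J3_def by auto
qed

lemma mult3_e3:
  "mult3 (e3 x y z) (e3 y z w) = (\<lambda>p q r. if p = x \<and> r = w \<and> x \<le> y \<and> y \<le> q \<and> q \<le> z \<and> z \<le> w then 1 else (0::'r::comm_ring_1))"
proof (rule ext, rule ext, rule ext)
  fix p q r :: 'a
  define S where "S = {(y1, y2). p \<le> y1 \<and> y1 \<le> q \<and> q \<le> y2 \<and> y2 \<le> r}"
  have "(\<Sum>(y1, y2) \<in> S. (e3 x y z p y1 y2 :: 'r) * e3 y z w y1 y2 r)
      = (\<Sum>k \<in> S. if k = (y, z) then (if p = x \<and> r = w then 1 else 0) else 0)"
    by (rule sum.cong) (auto simp: e3_def split: if_splits)
  also have "\<dots> = (if (y, z) \<in> S then (if p = x \<and> r = w then 1 else 0) else 0)"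
    by (rule sum.delta) simp
  finally show "mult3 (e3 x y z) (e3 y z w) p q r = (if p = x \<and> r = w \<and> x \<le> y \<and> y \<le> q \<and> q \<le> z \<and> z \<le> w then 1 else (0::'r))"
    unfolding mult3_def S_def[symmetric] by (auto simp: S_def intro: order_trans)
qed

lemma mult3_e3_0:
  assumes "(y, z) \<noteq> (y', z')"
  shows "mult3 (e3 x y z) (e3 y' z' w) = (0 :: ('a::{finite,order}, 'r::comm_ring_1) fun3)"
  using assms by (auto simp: mult3_def e3_def fun_eq_iff intro!: sum.neutral)

lemma e3_I3: "x \<le> y \<Longrightarrow> y \<le> z \<Longrightarrow> e3 x y z \<in> I3"
  by (auto simp: I3_def e3_def)

lemma e3_Z1: "x \<le> y \<Longrightarrow> y \<le> z \<Longrightarrow> x < z \<Longrightarrow> (e3 x y z :: ('a::{finite,order}, 'r::comm_ring_1) fun3) \<in> Z3_1"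
  by (auto simp: Z1_iff e3_I3) (auto simp: e3_def)

definition Wset :: "('a::{finite,order}, 'r::comm_ring_1) fun3 set" where
  "Wset = {mult3 u v | u v. u \<in> Z3_1 \<and> v \<in> Z3_1 \<and> mult3 v u = 0}"

lemma W_in: "u \<in> Z3_1 \<Longrightarrow> v \<in> Z3_1 \<Longrightarrow> mult3 v u = 0 \<Longrightarrow> mult3 u v \<in> m3.span Wset"
  by (rule m3.span_base) (auto simp: Wset_def)

lemma cover_prod:
  assumes iff: "\<And>q. (y \<le> q \<and> q \<le> z) = (q = y \<or> q = z)" and ne: "y \<noteq> z"
    and xy: "x \<le> y" and zw: "z \<le> w"
  shows "mult3 (e3 x y z) (e3 y z w) = (e3 x y w + e3 x z w :: ('a::{finite,order}, 'r::comm_ring_1) fun3)"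
proof (rule ext, rule ext, rule ext)
  fix p q r :: 'a
  have c: "(p = x \<and> r = w \<and> x \<le> y \<and> y \<le> q \<and> q \<le> z \<and> z \<le> w) = (p = x \<and> r = w \<and> (q = y \<or> q = z))"
    using iff[of q] xy zw by blast
  show "mult3 (e3 x y z) (e3 y z w) p q r = (e3 x y w + e3 x z w :: ('a, 'r) fun3) p q r"
    unfolding mult3_e3 c using ne by (auto simp: e3_def)
qed

lemma single_prod:
  assumes xy: "x \<le> y" and yw: "y \<le> w"
  shows "mult3 (e3 x y y) (e3 y y w) = (e3 x y w :: ('a::{finite,order}, 'r::comm_ring_1) fun3)"
proof (rule ext, rule ext, rule ext)
  fix p q r :: 'a
  have c: "(p = x \<and> r = w \<and> x \<le> y \<and> y \<le> q \<and> q \<le> y \<and> y \<le> w) = (p = x \<and> q = y \<and> r = w)"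
    using xy yw order.antisym[of y q] by blast
  show "mult3 (e3 x y y) (e3 y y w) p q r = (e3 x y w :: ('a, 'r) fun3) p q r"
    unfolding mult3_e3 c by (simp add: e3_def)
qed

lemma key1:
  assumes "a < b" "b < c"
  shows "(e3 a b c :: ('a::{finite,order}, 'r::comm_ring_1) fun3) \<in> m3.span Wset"
proof -
  have ab: "a \<le> b" and bc: "b \<le> c" using assms by (simp_all add: less_imp_le)
  have z: "mult3 (e3 b b c) (e3 a b b) = (0 :: ('a, 'r) fun3)"
    using assms by (intro mult3_e3_0) auto
  have "e3 a b b \<in> (Z3_1 :: ('a, 'r) fun3 set)" using assms by (intro e3_Z1) auto
  moreover have "e3 b b c \<in> (Z3_1 :: ('a, 'r) fun3 set)" using assms by (intro e3_Z1) auto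
  ultimately have "mult3 (e3 a b b) (e3 b b c) \<in> (m3.span Wset :: ('a, 'r) fun3 set)"
    using z by (rule W_in)
  then show ?thesis by (simp only: single_prod[OF ab bc])
qed

lemma key2:
  assumes "a < c" "betw a c"
  shows "(e3 a a c :: ('a::{finite,order}, 'r::comm_ring_1) fun3) \<in> m3.span Wset"
proof -
  have "finite {m. a < m \<and> m < c}" "{m. a < m \<and> m < c} \<noteq> {}" using assms by (auto simp: betw_def)
  from finite_has_minimal[OF this] obtain m where m: "a < m" "m < c"
    and mmin: "\<And>q. a < q \<Longrightarrow> q < c \<Longrightarrow> q \<le> m \<Longrightarrow> m = q" by auto
  have am: "a \<le> m" and mc: "m \<le> c" and mc': "a < c" using m by (simp_all add: less_imp_le assms)
  have iff: "(a \<le> q \<and> q \<le> m) = (q = a \<or> q = m)" for q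
  proof
    assume q: "a \<le> q \<and> q \<le> m"
    show "q = a \<or> q = m"
    proof (rule ccontr)
      assume "\<not> (q = a \<or> q = m)"
      then have aq: "a < q" and qm: "q < m" using q by (auto simp: less_le)
      have "q < c" using qm m(2) by (rule order.strict_trans)
      then have "m = q" using mmin[of q] aq qm by (simp add: less_imp_le)
      then show False using qm by simp
    qed
  qed (use am in auto)
  have ne: "a \<noteq> m" using m by auto
  have z: "mult3 (e3 a m c) (e3 a a m) = (0 :: ('a, 'r) fun3)"
    using ne by (intro mult3_e3_0) auto
  have "e3 a a m \<in> (Z3_1 :: ('a, 'r) fun3 set)" using m by (intro e3_Z1) auto
  moreover have "e3 a m c \<in> (Z3_1 :: ('a, 'r) fun3 set)" using am mc mc' by (intro e3_Z1)
  ultimately have "mult3 (e3 a a m) (e3 a m c) \<in> (m3.span Wset :: ('a, 'r) fun3 set)"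
    using z by (rule W_in)
  then have "(e3 a a c + e3 a m c :: ('a, 'r) fun3) \<in> m3.span Wset"
    by (simp only: cover_prod[OF iff ne order.refl mc])
  moreover have "(e3 a m c :: ('a, 'r) fun3) \<in> m3.span Wset" using m by (rule key1)
  ultimately have "(e3 a a c + e3 a m c) - e3 a m c \<in> (m3.span Wset :: ('a, 'r) fun3 set)"
    by (rule m3.span_diff)
  then show ?thesis by simp
qed

lemma key3:
  assumes "a < c" "betw a c"
  shows "(e3 a c c :: ('a::{finite,order}, 'r::comm_ring_1) fun3) \<in> m3.span Wset"
proof -
  have "finite {m. a < m \<and> m < c}" "{m. a < m \<and> m < c} \<noteq> {}" using assms by (auto simp: betw_def)
  from finite_has_maximal[OF this] obtain m where m: "a < m" "m < c"
    and mmax: "\<And>q. a < q \<Longrightarrow> q < c \<Longrightarrow> m \<le> q \<Longrightarrow> m = q" by auto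
  have am: "a \<le> m" and mc: "m \<le> c" and mc': "a < c" using m by (simp_all add: less_imp_le assms)
  have iff: "(m \<le> q \<and> q \<le> c) = (q = m \<or> q = c)" for q
  proof
    assume q: "m \<le> q \<and> q \<le> c"
    show "q = m \<or> q = c"
    proof (rule ccontr)
      assume "\<not> (q = m \<or> q = c)"
      then have mq: "m < q" and qc: "q < c" using q by (auto simp: less_le)
      have "a < q" using m(1) mq by (rule order.strict_trans)
      then have "m = q" using mmax[of q] mq qc by (simp add: less_imp_le)
      then show False using mq by simp
    qed
  qed (use mc in auto)
  have ne: "m \<noteq> c" using m by auto
  have z: "mult3 (e3 m c c) (e3 a m c) = (0 :: ('a, 'r) fun3)"
    using m by (intro mult3_e3_0) auto
  have "e3 a m c \<in> (Z3_1 :: ('a, 'r) fun3 set)" using am mc mc' by (intro e3_Z1)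
  moreover have "e3 m c c \<in> (Z3_1 :: ('a, 'r) fun3 set)" using m by (intro e3_Z1) auto
  ultimately have "mult3 (e3 a m c) (e3 m c c) \<in> (m3.span Wset :: ('a, 'r) fun3 set)"
    using z by (rule W_in)
  then have "(e3 a m c + e3 a c c :: ('a, 'r) fun3) \<in> m3.span Wset"
    by (simp only: cover_prod[OF iff ne am order.refl])
  moreover have "(e3 a m c :: ('a, 'r) fun3) \<in> m3.span Wset" using m by (rule key1)
  ultimately have "(e3 a m c + e3 a c c) - e3 a m c \<in> (m3.span Wset :: ('a, 'r) fun3 set)"
    by (rule m3.span_diff)
  then show ?thesis by simp
qed

lemma key:
  assumes "a \<le> b" "b \<le> c" "betw a c"
  shows "(e3 a b c :: ('a::{finite,order}, 'r::comm_ring_1) fun3) \<in> m3.span Wset"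
proof -
  have ac: "a < c" using assms(3) by (auto simp: betw_def)
  show ?thesis
  proof (cases "a = b")
    case True then show ?thesis using key2[OF ac assms(3)] by simp
  next
    case False
    show ?thesis
    proof (cases "b = c")
      case True then show ?thesis using key3[OF ac assms(3)] by simp
    next
      case False2: False
      then show ?thesis using False assms by (intro key1) (auto simp: less_le)
    qed
  qed
qed

definition Cset :: "('a::{finite,order}, 'r::comm_ring_1) fun3 set" where
  "Cset = {f \<in> I3. (\<forall>x. f x x x = 0) \<and> (\<forall>x w. x < w \<and> \<not> betw x w \<longrightarrow> f x x w = f x w w)}"

lemma CsetD:
  assumes "f \<in> Cset"
  shows "f \<in> I3" "f x x x = 0" "x < w \<Longrightarrow> \<not> betw x w \<Longrightarrow> f x x w = f x w w"
  using assms by (auto simp: Cset_def)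

lemma Cset_subspace: "m3.subspace (Cset :: ('a::{finite,order}, 'r::comm_ring_1) fun3 set)"
proof (rule m3.subspaceI)
  show "0 \<in> Cset" by (simp add: Cset_def I3_def)
next
  fix f g :: "('a, 'r) fun3" assume f: "f \<in> Cset" and g: "g \<in> Cset"
  have "f + g \<in> I3" using CsetD(1)[OF f] CsetD(1)[OF g] by (auto simp: I3_def)
  moreover have "(f + g) x x x = 0" for x by (simp add: CsetD(2)[OF f] CsetD(2)[OF g])
  moreover have "x < w \<Longrightarrow> \<not> betw x w \<Longrightarrow> (f + g) x x w = (f + g) x w w" for x w
    by (simp add: CsetD(3)[OF f] CsetD(3)[OF g])
  ultimately show "f + g \<in> Cset" by (auto simp: Cset_def)
next
  fix c :: 'r and f :: "('a, 'r) fun3" assume f: "f \<in> Cset"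
  have "scale3 c f \<in> I3" using CsetD(1)[OF f] by (auto simp: I3_def)
  moreover have "scale3 c f x x x = 0" for x by (simp add: CsetD(2)[OF f])
  moreover have "x < w \<Longrightarrow> \<not> betw x w \<Longrightarrow> scale3 c f x x w = scale3 c f x w w" for x w
    by (simp add: CsetD(3)[OF f])
  ultimately show "scale3 c f \<in> Cset" by (auto simp: Cset_def)
qed

lemma cover_iff: "x < w \<Longrightarrow> \<not> betw x w \<Longrightarrow> (x \<le> y \<and> y \<le> w) \<longleftrightarrow> (y = x \<or> y = w)"
  by (auto simp: betw_def less_le)

lemma mult3_Cset:
  assumes u: "u \<in> Z3_1" and v: "v \<in> Z3_1"
  shows "mult3 u v \<in> Cset"
proof -
  have u0: "u x x x = 0" and v0: "v x x x = 0" for x using u v by (auto simp: Z1_iff)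
  have I: "mult3 u v \<in> I3" by (auto simp: I3_def mult3_def)
  have D: "mult3 u v x x x = 0" for x
  proof -
    have "{(y1, y2). x \<le> y1 \<and> y1 \<le> x \<and> x \<le> y2 \<and> y2 \<le> x} = {(x, x)}"
      by (auto intro: order_antisym)
    then show ?thesis by (simp add: mult3_def u0)
  qed
  have Cv: "mult3 u v x x w = mult3 u v x w w" if xw: "x < w" "\<not> betw x w" for x w
  proof -
    have S1: "{(y1, y2). x \<le> y1 \<and> y1 \<le> x \<and> x \<le> y2 \<and> y2 \<le> w} = {(x, x), (x, w)}"
      using cover_iff[OF xw] xw by (auto intro: order_antisym)
    have S2: "{(y1, y2). x \<le> y1 \<and> y1 \<le> w \<and> w \<le> y2 \<and> y2 \<le> w} = {(x, w), (w, w)}"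
      using cover_iff[OF xw] xw by (auto intro: order_antisym)
    show ?thesis using xw by (simp add: mult3_def S1 S2 u0 v0 less_imp_le)
  qed
  show ?thesis using I D Cv by (auto simp: Cset_def)
qed

lemma expand3:
  fixes f :: "('a::finite, 'r::comm_ring_1) fun3"
  shows
  "f = (\<Sum>k\<in>UNIV. scale3 (f (fst k) (fst (snd k)) (snd (snd k))) (e3 (fst k) (fst (snd k)) (snd (snd k))))"
  (is "_ = ?s")
proof (rule ext, rule ext, rule ext)
  fix p q r :: 'a
  have "?s p q r = (\<Sum>k\<in>UNIV. if k = (p, q, r) then f p q r else 0)"
    unfolding sum_fun3 by (rule sum.cong) (auto simp: e3_def)
  also have "\<dots> = f p q r" by (subst sum.delta) auto
  finally show "f p q r = ?s p q r" by simp
qed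

lemma J2_span: "f \<in> J3 2 \<Longrightarrow> (f :: ('a::{finite,order}, 'r::comm_ring_1) fun3) \<in> m3.span Wset"
proof -
  assume f: "f \<in> J3 2"
  show ?thesis
  proof (subst expand3, rule m3.span_sum)
    fix k :: "'a \<times> 'a \<times> 'a"
    obtain a b c where k: "k = (a, b, c)" by (cases k) auto
    show "scale3 (f (fst k) (fst (snd k)) (snd (snd k))) (e3 (fst k) (fst (snd k)) (snd (snd k))) \<in> m3.span Wset"
    proof (cases "f a b c = 0")
      case True then show ?thesis using k m3.span_zero by (simp add: m3.scale_zero_left)
    next
      case False
      then have "a \<le> b" "b \<le> c" using f by (auto simp: J2_iff I3_def)
      moreover then have "betw a c" using f False by (auto simp: J2_iff)
      ultimately show ?thesis using k by (auto intro: m3.span_scale key)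
    qed
  qed
qed

lemma plen1_iff: "plen x w = 1 \<longleftrightarrow> (x::'a::{finite,order}) < w \<and> \<not> betw x w"
  using plen_ge1[of x w] plen_ge2[of x w] by linarith

lemma gen_B_aux: "x < w \<Longrightarrow> \<not> betw x w \<Longrightarrow> plen x w = 1"
  using plen1_iff by blast

definition Bgen :: "('a::{finite,order}, 'r::comm_ring_1) fun3 set" where
  "Bgen = {e3 x x y + e3 x y y | x y. x \<le> y \<and> plen x y = 1}"

lemma gen_W: "x < w \<Longrightarrow> \<not> betw x w \<Longrightarrow> (e3 x x w + e3 x w w :: ('a::{finite,order}, 'r::comm_ring_1) fun3) \<in> m3.span Wset"
proof -
  assume xw: "x < w" "\<not> betw x w"
  have "mult3 (e3 x x w) (e3 x w w) = (e3 x x w + e3 x w w :: ('a, 'r) fun3)"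
    by (rule cover_prod) (use xw cover_iff[OF xw] in \<open>auto simp: less_imp_le\<close>)
  moreover have "mult3 (e3 x w w) (e3 x x w) = (0 :: ('a, 'r) fun3)"
    using xw by (intro mult3_e3_0) auto
  moreover have "e3 x x w \<in> (Z3_1 :: ('a, 'r) fun3 set)" using xw by (intro e3_Z1) (auto simp: less_imp_le)
  moreover have "e3 x w w \<in> (Z3_1 :: ('a, 'r) fun3 set)" using xw by (intro e3_Z1) (auto simp: less_imp_le)
  ultimately show ?thesis using W_in by metis
qed

lemma gen_B: "x < w \<Longrightarrow> \<not> betw x w \<Longrightarrow> e3 x x w + e3 x w w \<in> Bgen"
  unfolding Bgen_def by (intro CollectI exI[of _ x] exI[of _ w]) (auto simp: less_imp_le gen_B_aux)

lemma decomp: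
  assumes f: "(f :: ('a::{finite,order}, 'r::comm_ring_1) fun3) \<in> Cset"
  shows "\<exists>s g. f = s + g \<and> s \<in> m3.span Bgen \<and> s \<in> m3.span Wset \<and> g \<in> J3 2"
proof -
  define K where "K = {(x, w). (x::'a) < w \<and> \<not> betw x w}"
  define s where "s = (\<Sum>k\<in>K. scale3 (f (fst k) (fst k) (snd k)) (e3 (fst k) (fst k) (snd k) + e3 (fst k) (snd k) (snd k)))"
  have sev: "s p q r = (if p < r \<and> \<not> betw p r \<and> (q = p \<or> q = r) then f p p r else 0)" for p q r
  proof -
    have "s p q r = (\<Sum>k\<in>K. if k = (p, r) then (if q = p \<or> q = r then f p p r else 0) else 0)"
      unfolding s_def sum_fun3
      by (rule sum.cong) (auto simp: K_def e3_def)
    also have "\<dots> = (if (p, r) \<in> K then (if q = p \<or> q = r then f p p r else 0) else 0)"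
      by (rule sum.delta) simp
    finally show ?thesis by (auto simp: K_def)
  qed
  have sB: "s \<in> m3.span Bgen"
    unfolding s_def
    by (rule m3.span_sum, rule m3.span_scale, rule m3.span_base)
       (auto simp: K_def intro: gen_B)
  have sW: "s \<in> m3.span Wset"
    unfolding s_def
    by (rule m3.span_sum, rule m3.span_scale) (auto simp: K_def intro: gen_W)
  have fI: "f \<in> I3" and f0: "\<And>x. f x x x = 0" and fc: "\<And>x w. x < w \<Longrightarrow> \<not> betw x w \<Longrightarrow> f x x w = f x w w"
    using f by (auto simp: Cset_def)
  have sI: "s \<in> I3" by (auto simp: I3_def sev less_imp_le)
  have "f - s \<in> J3 2"
    unfolding J2_iff
  proof (intro conjI allI impI)
    show "f - s \<in> I3" using fI sI by (auto simp: I3_def)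
  next
    fix x1 x2 x3 :: 'a
    assume h: "x1 \<le> x2 \<and> x2 \<le> x3 \<and> \<not> betw x1 x3"
    show "(f - s) x1 x2 x3 = 0"
    proof (cases "x1 = x3")
      case True
      then have "x2 = x1" using h by (auto intro: order_antisym)
      then show ?thesis using True f0 by (simp add: sev)
    next
      case False
      then have lt: "x1 < x3" using h by (auto simp: less_le intro: order_trans)
      then have "x2 = x1 \<or> x2 = x3" using cover_iff[OF lt] h by auto
      then show ?thesis using lt h fc[OF lt] by (auto simp: sev)
    qed
  qed
  then show ?thesis using sB sW by (intro exI[of _ s] exI[of _ "f - s"]) auto
qed

definition Dset :: "('a::{finite,order}, 'r::comm_ring_1) fun3 set" where
  "Dset = {f. \<forall>a b c. \<not> (a < c \<and> \<not> betw a c) \<longrightarrow> f a b c = 0}"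

lemma Dset_subspace: "m3.subspace (Dset :: ('a::{finite,order}, 'r::comm_ring_1) fun3 set)"
  by (rule m3.subspaceI) (auto simp: Dset_def)

lemma BgenE:
  assumes "x \<in> Bgen"
  obtains a c where "x = e3 a a c + e3 a c c" "a < c" "\<not> betw a c"
proof -
  from assms obtain a c where "x = e3 a a c + e3 a c c" "plen a c = 1"
    unfolding Bgen_def by blast
  with that show ?thesis using plen1_iff by blast
qed

lemma Bgen_D: "Bgen \<subseteq> Dset"
proof
  fix x :: "('a, 'b) fun3" assume "x \<in> Bgen"
  then obtain a c where "x = e3 a a c + e3 a c c" "a < c" "\<not> betw a c" by (rule BgenE)
  then show "x \<in> Dset" by (auto simp: Dset_def e3_def)
qed

theorem lemma2p5:
  fixes B :: "('a::{finite,order}, 'r::comm_ring_1) fun3 set"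
  defines "B \<equiv> rspan {e3 x x y + e3 x y y | x y. x \<le> y \<and> plen x y = 1}"
  shows "(Z3_2 :: ('a, 'r) fun3 set) = setprod3 Z3_1 Z3_1
    \<and> setprod3 (Z3_1 :: ('a, 'r) fun3 set) Z3_1 = {b + j | b j. b \<in> B \<and> j \<in> J3 2}
    \<and> B \<inter> J3 2 = {0}
    \<and> (\<forall>f \<in> Z3_2. \<forall>g \<in> Z3_2. mult3 f g \<in> (Z3_2 :: ('a, 'r) fun3 set))"
proof -
  define Gc where "Gc = {commut3 u v | u v. u \<in> (Z3_1 :: ('a, 'r) fun3 set) \<and> v \<in> Z3_1}"
  define Gp where "Gp = {mult3 u v | u v. u \<in> (Z3_1 :: ('a, 'r) fun3 set) \<and> v \<in> Z3_1}"
  have Z2: "(Z3_2 :: ('a, 'r) fun3 set) = m3.span Gc"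
    by (simp add: Z3_2_def setcomm3_def rspan_eq Gc_def)
  have P: "setprod3 (Z3_1 :: ('a, 'r) fun3 set) Z3_1 = m3.span Gp"
    by (simp add: setprod3_def rspan_eq Gp_def)
  have BB: "B = m3.span Bgen" by (simp add: B_def rspan_eq Bgen_def)
  have L1: "m3.span Gp \<subseteq> Cset"
    by (rule m3.span_minimal[OF _ Cset_subspace]) (auto simp: Gp_def intro: mult3_Cset)
  have L2: "(Cset :: ('a, 'r) fun3 set) \<subseteq> m3.span Wset"
  proof
    fix f :: "('a, 'r) fun3" assume "f \<in> Cset"
    from decomp[OF this] obtain s g where "f = s + g" "s \<in> m3.span Wset" "g \<in> J3 2" by blast
    then show "f \<in> m3.span Wset" using J2_span m3.span_add by blast
  qed
  have L3: "m3.span (Wset :: ('a, 'r) fun3 set) \<subseteq> m3.span Gc"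
  proof (rule m3.span_mono, rule subsetI)
    fix x :: "('a, 'r) fun3" assume "x \<in> Wset"
    then obtain u v where "x = mult3 u v" "u \<in> Z3_1" "v \<in> Z3_1" "mult3 v u = 0"
      by (auto simp: Wset_def)
    then show "x \<in> Gc" unfolding Gc_def commut3_def
      by (intro CollectI exI[of _ u] exI[of _ v]) auto
  qed
  have L4: "m3.span Gc \<subseteq> m3.span Gp"
  proof (rule m3.span_minimal[OF _ m3.subspace_span], rule subsetI)
    fix x assume "x \<in> Gc"
    then obtain u v where x: "x = commut3 u v" and uv: "u \<in> Z3_1" "v \<in> Z3_1" by (auto simp: Gc_def)
    have "mult3 u v \<in> m3.span Gp" "mult3 v u \<in> m3.span Gp"
      using uv by (auto simp: Gp_def intro!: m3.span_base)
    then show "x \<in> m3.span Gp" unfolding x commut3_def by (rule m3.span_diff)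
  qed
  have EC: "m3.span Gc = Cset" and EP: "m3.span Gp = Cset" using L1 L2 L3 L4 by auto
  have BC: "m3.span Bgen \<subseteq> (Cset :: ('a, 'r) fun3 set)"
  proof (rule m3.span_minimal[OF _ Cset_subspace], rule subsetI)
    fix x :: "('a, 'r) fun3" assume "x \<in> Bgen"
    then obtain a c where "x = e3 a a c + e3 a c c" "a < c" "\<not> betw a c"
      by (rule BgenE)
    then show "x \<in> Cset" using gen_W L2 L3 EC by blast
  qed
  have JC: "J3 2 \<subseteq> (Cset :: ('a, 'r) fun3 set)" using J2_span L3 EC by blast
  have T: "{b + j | b j. b \<in> B \<and> j \<in> J3 2} = Cset"
  proof
    show "{b + j | b j. b \<in> B \<and> j \<in> J3 2} \<subseteq> Cset"
      using BC JC m3.subspace_add[OF Cset_subspace] unfolding BB by blast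
  next
    show "Cset \<subseteq> {b + j | b j. b \<in> B \<and> j \<in> J3 2}"
    proof
      fix f :: "('a, 'r) fun3" assume "f \<in> Cset"
      from decomp[OF this] obtain s g where "f = s + g" "s \<in> m3.span Bgen" "g \<in> J3 2" by blast
      then show "f \<in> {b + j | b j. b \<in> B \<and> j \<in> J3 2}" unfolding BB by blast
    qed
  qed
  have BD: "B \<subseteq> Dset" unfolding BB by (rule m3.span_minimal[OF Bgen_D Dset_subspace])
  have I: "B \<inter> J3 2 = {0}"
  proof
    show "{0} \<subseteq> B \<inter> J3 2" unfolding BB by (auto simp: m3.span_zero J3_def I3_def)
  next
    show "B \<inter> J3 2 \<subseteq> {0}"
    proof
      fix f assume f: "f \<in> B \<inter> J3 2"
      have "f a b c = 0" for a b c
      proof (cases "a < c \<and> \<not> betw a c")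
        case True
        show ?thesis
        proof (cases "a \<le> b \<and> b \<le> c")
          case True2: True
          then show ?thesis using f True by (auto simp: J2_iff)
        next
          case False
          then show ?thesis using f by (auto simp: J2_iff I3_def)
        qed
      next
        case False
        then show ?thesis using f BD by (auto simp: Dset_def)
      qed
      then show "f \<in> {0}" by (auto simp: fun_eq_iff)
    qed
  qed
  have M: "\<forall>f \<in> Z3_2. \<forall>g \<in> Z3_2. mult3 f g \<in> (Z3_2 :: ('a, 'r) fun3 set)"
  proof (intro ballI)
    fix f g :: "('a, 'r) fun3" assume "f \<in> Z3_2" "g \<in> Z3_2"
    then have "f \<in> Cset" "g \<in> Cset" using Z2 EC by auto
    then have "f \<in> Z3_1" "g \<in> Z3_1" by (auto simp: Z1_iff Cset_def)
    then have "mult3 f g \<in> Gp" by (auto simp: Gp_def)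
    then show "mult3 f g \<in> Z3_2" using Z2 EC EP m3.span_base by blast
  qed
  show ?thesis using Z2 P EC EP T I M by auto
qed

end
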